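(* For every integer $n\ge 1$, \[ \sum_{k=1}^{n}(-1)^{k-1}\genfrac{\{}{\}}{0pt}{}{n}{k}(k-1)!\,H_{k}=B_{n-1}. \] For integers $n>1$, $m\ge 1$ with $n+m$ odd (and $n+m\ge 3$), \[ (-1)^{n-1}\frac{n-1}{2}B_{n+m-1}=\sum_{j=1}^{n}\sum_{k=1}^{m}(-1)^{k+j}\genfrac{\{}{\}}{0pt}{}{n}{j}\genfrac{\{}{\}}{0pt}{}{m}{k}\frac{j!\,k!\,H_{j}}{(k+j)(k+j+1)}. \]
   Context: $\genfrac{\{}{\}}{0pt}{}{n}{k}$ denotes the Stirling numbers of the second kind, $H_k=\sum_{i=1}^k 1/i$ the harmonic numbers, and $B_n$ the Bernoulli numbers, $\sum_{n\ge0}B_n t^n/n!=t/(e^t-1)$ (so $B_1=-1/2$). *)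

theory Defs
  imports "HOL-Analysis.Analysis" "HOL-Combinatorics.Stirling"
    "HOL-Computational_Algebra.Formal_Power_Series"
begin

text \<open>Bernoulli numbers via the exponential generating function
  sum B_n t^n / n! = t / (e^t - 1), so B_1 = -1/2.\<close>
definition bernoulli :: "nat \<Rightarrow> real" where
  "bernoulli n = fact n * fps_nth (fps_X / (fps_exp 1 - 1)) n"

end

theory Submission
  imports Defs "HOL-Computational_Algebra.Polynomial"
begin


lemma bern_rec:
  "(\<Sum>k<n. real (n choose k) * bernoulli k) = (if n = 1 then 1 else 0)"
proof -
  define b :: "real fps" where "b = fps_X / (fps_exp 1 - 1)"
  have ne: "(fps_exp 1 - 1 :: real fps) \<noteq> 0"
  proof
    assume "(fps_exp 1 - 1 :: real fps) = 0"
    hence "fps_nth (fps_exp 1 - 1 :: real fps) 1 = 0" by simp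
    thus False by (simp add: fps_exp_def)
  qed
  have sd: "subdegree (fps_exp 1 - 1 :: real fps) = 1"
    by (rule subdegreeI) (auto simp: fps_exp_def)
  have "b * (fps_exp 1 - 1) = fps_X"
    unfolding b_def using fps_times_divide_eq[OF ne] sd by simp
  hence "fps_nth (b * (fps_exp 1 - 1)) n = fps_nth fps_X n" by simp
  hence "(\<Sum>i=0..n. fps_nth b i * (1 / fact (n - i) - (if n = i then 1 else 0))) = (if n = 1 then 1 else 0)"
    by (simp add: fps_mult_nth fps_exp_def)
  moreover have "(\<Sum>i=0..n. fps_nth b i * (1 / fact (n - i) - (if n = i then 1 else 0)))
     = (\<Sum>i=0..n. fps_nth b i * (if n - i = 0 then 0 else 1 / fact (n - i)))"
    by (rule sum.cong) auto
  ultimately have "(\<Sum>i=0..n. fps_nth b i * (if n - i = 0 then 0 else 1 / fact (n - i))) = (if n = 1 then 1 else 0)"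
    by simp
  moreover have "(\<Sum>i=0..n. fps_nth b i * (if n - i = 0 then 0 else 1 / fact (n - i)))
      = (\<Sum>k<n. fps_nth b k / fact (n - k))"
  proof -
    have "(\<Sum>i=0..n. fps_nth b i * (if n - i = 0 then 0 else 1 / fact (n - i)))
        = (\<Sum>i<Suc n. fps_nth b i * (if n - i = 0 then 0 else 1 / fact (n - i)))"
      by (simp add: atLeast0AtMost lessThan_Suc_atMost)
    also have "\<dots> = (\<Sum>k<n. fps_nth b k / fact (n - k))"
      by (simp add: sum.lessThan_Suc)
    finally show ?thesis .
  qed
  ultimately have e: "(\<Sum>k<n. fps_nth b k / fact (n - k)) = (if n = 1 then 1 else 0)" by simp
  have "(\<Sum>k<n. real (n choose k) * bernoulli k) = fact n * (\<Sum>k<n. fps_nth b k / fact (n - k))"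
    unfolding sum_distrib_left
  proof (rule sum.cong)
    fix k assume "k \<in> {..<n}"
    hence "k \<le> n" by simp
    thus "real (n choose k) * bernoulli k = fact n * (fps_nth b k / fact (n - k))"
      by (simp add: binomial_fact bernoulli_def b_def field_simps)
  qed simp
  also have "\<dots> = (if n = 1 then 1 else 0)" using e by simp
  finally show ?thesis .
qed



definition xp :: "real poly" where "xp = [:0, 1:]"
definition om :: "real poly" where "om = [:1, -1:]"

definition mk :: "nat \<Rightarrow> (nat \<Rightarrow> real) \<Rightarrow> real poly" where
  "mk n f = (\<Sum>k<n. monom (f k) k)"

lemma coeff_mk: "coeff (mk n f) i = (if i < n then f i else 0)"
  unfolding mk_def coeff_sum coeff_monom by (simp add: sum.delta')

lemma pderiv_sum: "pderiv (\<Sum>x\<in>A. f x) = (\<Sum>x\<in>A. pderiv (f x))"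
  by (induction A rule: infinite_finite_induct) (auto simp: pderiv_add)

lemma coeff_xp_mult: "coeff (xp * p) i = (if i = 0 then 0 else coeff p (i - 1))"
  by (simp add: xp_def coeff_pCons split: nat.split)

lemma coeff_om_mult: "coeff (om * p) i = coeff p i - (if i = 0 then 0 else coeff p (i - 1))"
  by (simp add: om_def coeff_pCons algebra_simps split: nat.split)

lemma coeff_L: "coeff (xp * om * pderiv p - xp * p) i
   = of_nat i * (coeff p i - (if i = 0 then 0 else coeff p (i - 1)))"
proof (cases i)
  case 0 then show ?thesis by (simp add: mult.assoc coeff_xp_mult)
next
  case (Suc j)
  then show ?thesis
    by (cases j) (auto simp add: mult.assoc coeff_xp_mult coeff_om_mult coeff_pderiv algebra_simps)
qed

lemma coeff_D: "coeff (pderiv (xp * om * p)) i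
   = of_nat (Suc i) * (coeff p i - (if i = 0 then 0 else coeff p (i - 1)))"
  by (cases i) (auto simp add: mult.assoc coeff_xp_mult coeff_om_mult coeff_pderiv)

definition P :: "nat \<Rightarrow> real poly" where
  "P n = mk (Suc n) (\<lambda>k. (-1)^k * real (Stirling n k) * fact k)"
definition pt :: "nat \<Rightarrow> real poly" where
  "pt n = mk n (\<lambda>k. (-1)^(Suc k) * real (Stirling n (Suc k)) * fact (Suc k))"
definition qt :: "nat \<Rightarrow> real poly" where
  "qt n = mk n (\<lambda>k. (-1)^(Suc k) * real (Stirling n (Suc k)) * fact (Suc k) * harm (Suc k))"

lemma coeff_P: "coeff (P n) k = (-1)^k * real (Stirling n k) * fact k"
  by (simp add: P_def coeff_mk)
lemma coeff_pt: "coeff (pt n) k = (-1)^(Suc k) * real (Stirling n (Suc k)) * fact (Suc k)"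
  by (simp add: pt_def coeff_mk)
lemma coeff_qt: "coeff (qt n) k = (-1)^(Suc k) * real (Stirling n (Suc k)) * fact (Suc k) * harm (Suc k)"
  by (simp add: qt_def coeff_mk)

lemma Stirling_n0: "n \<ge> 1 \<Longrightarrow> Stirling n 0 = 0"
  by (cases n) auto

lemma P_xpt: "n \<ge> 1 \<Longrightarrow> P n = xp * pt n"
  by (rule poly_eqI) (auto simp: coeff_xp_mult coeff_P coeff_pt Stirling_n0)

lemma P_rec: "P (Suc n) = xp * om * pderiv (P n) - xp * P n"
proof (rule poly_eqI)
  fix i
  have "coeff (P (Suc n)) i = of_nat i * (coeff (P n) i - (if i = 0 then 0 else coeff (P n) (i - 1)))"
  proof (cases i)
    case 0 then show ?thesis by (simp add: coeff_P)
  next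
    case (Suc j)
    show ?thesis unfolding coeff_P Suc
      by (simp add: algebra_simps)
  qed
  then show "coeff (P (Suc n)) i = coeff (xp * om * pderiv (P n) - xp * P n) i"
    by (simp only: coeff_L)
qed

lemma pt_rec: "n \<ge> 1 \<Longrightarrow> pt (Suc n) = pderiv (xp * om * pt n)"
proof (rule poly_eqI)
  fix i assume n: "n \<ge> 1"
  have "coeff (pt (Suc n)) i = of_nat (Suc i) * (coeff (pt n) i - (if i = 0 then 0 else coeff (pt n) (i - 1)))"
  proof (cases i)
    case 0 then show ?thesis using n by (simp add: coeff_pt Stirling_n0)
  next
    case (Suc j)
    show ?thesis unfolding coeff_pt Suc
      by (simp add: algebra_simps)
  qed
  then show "coeff (pt (Suc n)) i = coeff (pderiv (xp * om * pt n)) i"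
    by (simp only: coeff_D)
qed

lemma qt_rec: "qt (Suc n) = pderiv (xp * om * qt n) - P n"
proof (rule poly_eqI)
  fix i
  have "coeff (qt (Suc n)) i = of_nat (Suc i) * (coeff (qt n) i - (if i = 0 then 0 else coeff (qt n) (i - 1))) - coeff (P n) i"
  proof (cases i)
    case 0 then show ?thesis by (simp add: coeff_qt coeff_P harm_def algebra_simps)
  next
    case (Suc j)
    have gen: "(-1)^(Suc i) * real (Stirling (Suc n) (Suc i)) * fact (Suc i) * harm (Suc i)
      = of_nat (Suc i) * ((-1)^(Suc i) * real (Stirling n (Suc i)) * fact (Suc i) * harm (Suc i)
         - (-1)^i * real (Stirling n i) * fact i * harm i) - (-1)^i * real (Stirling n i) * fact i"
    proof -
      have h: "harm (Suc i) = harm i + 1 / (1 + real i)"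
        by (simp add: harm_Suc field_simps)
      have s: "real (Stirling (Suc n) (Suc i)) = (1 + real i) * real (Stirling n (Suc i)) + real (Stirling n i)"
        by (simp add: algebra_simps)
      have f: "(fact (Suc i) :: real) = (1 + real i) * fact i" by simp
      show ?thesis unfolding h s f by (simp add: field_simps)
    qed
    show ?thesis using gen unfolding coeff_qt coeff_P Suc by simp
  qed
  then show "coeff (qt (Suc n)) i = coeff (pderiv (xp * om * qt n) - P n) i"
    by (simp only: coeff_D coeff_diff)
qed

definition adr :: "real poly \<Rightarrow> real poly" where
  "adr p = (\<Sum>i\<le>degree p. monom (coeff p i / real (Suc i)) (Suc i))"

lemma pderiv_adr: "pderiv (adr p) = p"
proof -
  have "pderiv (adr p) = (\<Sum>i\<le>degree p. monom (coeff p i) i)"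
    unfolding adr_def pderiv_sum pderiv_monom by simp
  also have "\<dots> = p" by (rule poly_as_sum_of_monoms)
  finally show ?thesis .
qed

definition I :: "real poly \<Rightarrow> real" where
  "I p = poly (adr p) 1 - poly (adr p) 0"

lemma I_anti: assumes "pderiv A = p" shows "I p = poly A 1 - poly A 0"
proof -
  have "pderiv (A - adr p) = 0" using assms by (simp add: pderiv_diff pderiv_adr)
  then obtain h where "A - adr p = [:h:]" using pderiv_iszero by blast
  hence "A = adr p + [:h:]" by (simp add: algebra_simps)
  thus ?thesis by (simp add: I_def)
qed

lemma I_add: "I (p + q) = I p + I q"
  by (subst I_anti[of "adr p + adr q"]) (auto simp: pderiv_add pderiv_adr I_def)
lemma I_diff: "I (p - q) = I p - I q"
  by (subst I_anti[of "adr p - adr q"]) (auto simp: pderiv_diff pderiv_adr I_def)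
lemma I_uminus: "I (- p) = - I p"
  by (subst I_anti[of "- adr p"]) (auto simp: pderiv_minus pderiv_adr I_def)
lemma I_smult: "I (smult c p) = c * I p"
  by (subst I_anti[of "smult c (adr p)"]) (auto simp: pderiv_smult pderiv_adr I_def algebra_simps)
lemma I_zero: "I 0 = 0"
  by (subst I_anti[of 0]) auto
lemma I_sum: "I (\<Sum>x\<in>A. f x) = (\<Sum>x\<in>A. I (f x))"
  by (induction A rule: infinite_finite_induct) (auto simp: I_add I_zero)
lemma I_monom: "I (monom c d) = c / real (Suc d)"
  by (subst I_anti[of "monom (c / real (Suc d)) (Suc d)"]) (auto simp: pderiv_monom poly_monom)
lemma I_pderiv: "I (pderiv h) = poly h 1 - poly h 0"
  by (rule I_anti) simp
lemma I_parts: "I (f * pderiv g) = poly (f * g) 1 - poly (f * g) 0 - I (pderiv f * g)"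
proof -
  have "I (pderiv (f * g)) = I (f * pderiv g) + I (pderiv f * g)"
    by (simp add: pderiv_mult I_add algebra_simps)
  thus ?thesis using I_pderiv[of "f * g"] by simp
qed
lemma I_refl: "I (pcompose p om) = I p"
proof -
  have "pderiv (pcompose (adr p) om) = - pcompose p om"
    by (simp add: pderiv_pcompose pderiv_adr om_def pderiv_pCons)
  hence "I (- pcompose p om) = poly (pcompose (adr p) om) 1 - poly (pcompose (adr p) om) 0"
    by (rule I_anti)
  hence "- I (pcompose p om) = poly (adr p) 0 - poly (adr p) 1"
    by (simp add: I_uminus poly_pcompose om_def)
  thus ?thesis by (simp add: I_def[of p])
qed

lemma om_eq: "om = 1 - xp"
  by (simp add: om_def xp_def one_pCons)
lemma pderiv_xp: "pderiv xp = 1"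
  by (simp add: xp_def pderiv_pCons)
lemma pderiv_om: "pderiv om = -1"
  by (rule poly_eqI) (simp add: om_def pderiv_pCons coeff_pCons split: nat.split)
lemma poly_xp: "poly xp x = x" by (simp add: xp_def)
lemma poly_om: "poly om x = 1 - x" by (simp add: om_def)

lemma I_pt0: "n \<ge> 2 \<Longrightarrow> I (pt n) = 0"
proof -
  assume "n \<ge> 2"
  then obtain m where m: "n = Suc m" "m \<ge> 1" by (cases n) auto
  show ?thesis unfolding m pt_rec[OF m(2)] I_pderiv by (simp add: poly_xp poly_om)
qed

lemma I_qt: "I (qt (Suc N)) = - I (P N)"
  unfolding qt_rec I_diff I_pderiv by (simp add: poly_xp poly_om)

lemma P0: "P 0 = 1" by (simp add: P_def mk_def)
lemma P1: "P (Suc 0) = - xp" using P_rec[of 0] by (simp add: P0)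

lemma binom_shift:
  fixes f :: "nat \<Rightarrow> real poly"
  shows "(\<Sum>k\<le>Suc n. smult (real (Suc n choose k)) (f k))
     = (\<Sum>k\<le>n. smult (real (n choose k)) (f k + f (Suc k)))"
proof -
  have "(\<Sum>k\<le>Suc n. smult (real (Suc n choose k)) (f k))
      = f 0 + (\<Sum>k\<le>n. smult (real (Suc n choose Suc k)) (f (Suc k)))"
    by (subst sum.atMost_Suc_shift) simp
  also have "\<dots> = f 0 + (\<Sum>k\<le>n. smult (real (n choose k)) (f (Suc k)))
       + (\<Sum>k\<le>n. smult (real (n choose Suc k)) (f (Suc k)))"
    by (simp add: sum.distrib smult_add_left)
  also have "f 0 + (\<Sum>k\<le>n. smult (real (n choose Suc k)) (f (Suc k)))
      = (\<Sum>k\<le>n. smult (real (n choose k)) (f k))"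
  proof (cases n)
    case 0 then show ?thesis by simp
  next
    case (Suc m)
    have "(\<Sum>k\<le>n. smult (real (n choose k)) (f k))
        = f 0 + (\<Sum>k\<le>m. smult (real (n choose Suc k)) (f (Suc k)))"
      unfolding Suc by (subst sum.atMost_Suc_shift) simp
    moreover have "(\<Sum>k\<le>n. smult (real (n choose Suc k)) (f (Suc k)))
        = (\<Sum>k\<le>m. smult (real (n choose Suc k)) (f (Suc k)))"
      unfolding Suc by (simp add: sum.atMost_Suc binomial_eq_0)
    ultimately show ?thesis by simp
  qed
  ultimately show ?thesis by (simp add: sum.distrib smult_add_right algebra_simps)
qed

definition Lop :: "real poly \<Rightarrow> real poly" where
  "Lop p = xp * om * pderiv p - xp * p"

lemma Lop_sum: "Lop (\<Sum>k\<in>A. smult (c k) (f k)) = (\<Sum>k\<in>A. smult (c k) (Lop (f k)))"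
  by (induction A rule: infinite_finite_induct)
     (auto simp: Lop_def pderiv_add pderiv_smult smult_add_right smult_diff_right algebra_simps)

definition Pstar :: "nat \<Rightarrow> real poly" where
  "Pstar n = (\<Sum>k\<le>n. smult (real (n choose k)) (P k))"

lemma Pstar_Suc: "Pstar (Suc n) = Lop (Pstar n) + Pstar n"
proof -
  have "Pstar (Suc n) = (\<Sum>k\<le>n. smult (real (n choose k)) (P k + P (Suc k)))"
    unfolding Pstar_def by (rule binom_shift)
  also have "\<dots> = (\<Sum>k\<le>n. smult (real (n choose k)) (Lop (P k))) + Pstar n"
    by (simp add: Pstar_def P_rec Lop_def smult_add_right smult_diff_right sum.distrib sum_subtractf algebra_simps)
  finally show ?thesis by (simp add: Lop_sum Pstar_def)
qed

lemma Pstar_id: "n \<ge> 1 \<Longrightarrow> xp * Pstar n = (xp - 1) * P n"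
proof (induction n rule: dec_induct)
  case base
  show ?case by (simp add: Pstar_def P0 P1 algebra_simps)
next
  case (step n)
  define A where "A = Pstar n"
  define Q where "Q = P n"
  have h: "xp * A = (xp - 1) * Q" using step A_def Q_def by simp
  have h': "A + xp * pderiv A = Q + (xp - 1) * pderiv Q"
    using arg_cong[OF h, of pderiv] by (simp add: pderiv_mult pderiv_diff pderiv_xp algebra_simps)
  have "xp * (Lop A + A) = (xp - 1) * Lop Q"
    unfolding Lop_def om_eq using h h' by algebra
  thus ?case by (simp add: A_def Q_def Pstar_Suc P_rec Lop_def)
qed



lemma c_rec: assumes "N \<ge> 1" shows "(\<Sum>k<Suc N. real (Suc N choose k) * I (P k)) = 0"
proof -
  define R where "R = (\<Sum>k\<le>N. smult (real (Suc N choose k)) (P k))"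
  have "Pstar (Suc N) = R + P (Suc N)"
    unfolding Pstar_def R_def by (simp add: sum.atMost_Suc)
  hence "xp * (R + P (Suc N)) = (xp - 1) * P (Suc N)" using Pstar_id[of "Suc N"] by simp
  hence "xp * R = - P (Suc N)" by (simp add: algebra_simps)
  also have "\<dots> = xp * (- pt (Suc N))" using P_xpt[of "Suc N"] by simp
  finally have "R = - pt (Suc N)" by (simp add: xp_def)
  hence "I R = 0" using I_pt0[of "Suc N"] assms by (simp add: I_uminus)
  thus ?thesis unfolding R_def I_sum I_smult by (simp add: lessThan_Suc_atMost)
qed

lemma c_bern: "I (P N) = bernoulli N"
proof (induction N rule: less_induct)
  case (less N)
  show ?case
  proof (cases N)
    case 0
    have "I (P 0) = 1" by (simp add: P0 I_monom[of 1 0, simplified])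
    moreover have "bernoulli 0 = 1" using bern_rec[of 1] by simp
    ultimately show ?thesis using 0 by simp
  next
    case (Suc M)
    hence N1: "N \<ge> 1" by simp
    have a: "(\<Sum>k<Suc N. real (Suc N choose k) * I (P k)) = (\<Sum>k<Suc N. real (Suc N choose k) * bernoulli k)"
      using c_rec[OF N1] bern_rec[of "Suc N"] N1 by simp
    have b: "(\<Sum>k<N. real (Suc N choose k) * I (P k)) = (\<Sum>k<N. real (Suc N choose k) * bernoulli k)"
      by (rule sum.cong) (auto simp: less)
    from a b have "real (Suc N choose N) * I (P N) = real (Suc N choose N) * bernoulli N"
      by (simp add: sum.lessThan_Suc)
    thus ?thesis by simp
  qed
qed

lemma part1: assumes "n \<ge> 1"
  shows "(\<Sum>k=1..n. (-1) ^ (k - 1) * real (Stirling n k) * fact (k - 1) * harm k) = bernoulli (n - 1)"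
proof -
  obtain N where N: "n = Suc N" using assms by (cases n) auto
  have "(\<Sum>k=1..n. (-1) ^ (k - 1) * real (Stirling n k) * fact (k - 1) * harm k)
      = (\<Sum>k<n. (-1) ^ k * real (Stirling n (Suc k)) * fact k * harm (Suc k))"
    by (rule sum.reindex_bij_witness[of _ Suc "\<lambda>k. k - 1"]) auto
  also have "\<dots> = - I (qt n)"
    unfolding qt_def mk_def I_sum I_monom sum_negf[symmetric]
    by (rule sum.cong) (auto simp: field_simps)
  also have "\<dots> = I (P N)" unfolding N I_qt by simp
  also have "\<dots> = bernoulli (n - 1)" using c_bern N by simp
  finally show ?thesis .
qed

definition T :: "nat \<Rightarrow> nat \<Rightarrow> real" where "T n m = I (om * qt n * P m)"
definition W :: "nat \<Rightarrow> nat \<Rightarrow> real" where "W a b = I (om * P a * P b)"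
definition V :: "nat \<Rightarrow> nat \<Rightarrow> real" where "V a b = I (xp * om * pt a * pt b)"

lemma T_rec: "T (Suc n) m = - T n (Suc m) - W n m"
proof -
  have "T (Suc n) m = I ((om * P m) * pderiv (xp * om * qt n)) - W n m"
    unfolding T_def W_def qt_rec by (simp add: algebra_simps I_diff)
  also have "I ((om * P m) * pderiv (xp * om * qt n)) = - I (pderiv (om * P m) * (xp * om * qt n))"
    unfolding I_parts by (simp add: poly_xp poly_om)
  also have "pderiv (om * P m) * (xp * om * qt n) = om * qt n * P (Suc m)"
    by (simp add: P_rec pderiv_mult pderiv_om algebra_simps)
  finally show ?thesis by (simp add: T_def)
qed

lemma T0: "T 0 m = 0" by (simp add: T_def qt_def mk_def I_zero)

lemma T_sum: "T n m = (\<Sum>i<n. (-1)^(n+i) * W i (n + m - 1 - i))"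
proof (induction n arbitrary: m)
  case 0 then show ?case by (simp add: T0)
next
  case (Suc n)
  have "T (Suc n) m = - (\<Sum>i<n. (-1)^(n+i) * W i (n + m - i)) - W n m"
    unfolding T_rec Suc by simp
  also have "\<dots> = (\<Sum>i<Suc n. (-1)^(Suc n+i) * W i (Suc n + m - 1 - i))"
    by (simp add: sum.lessThan_Suc sum_negf[symmetric])
  finally show ?case .
qed

lemma pcompose_xp: "pcompose xp om = om"
  by (rule poly_ext) (simp add: poly_pcompose poly_xp poly_om)
lemma pcompose_om: "pcompose om om = xp"
  by (rule poly_ext) (simp add: poly_pcompose poly_xp poly_om)

lemma pt1: "pt (Suc 0) = [:-1:]"
  by (rule poly_eqI) (simp add: coeff_pt coeff_pCons split: nat.split)

lemma pt_refl: "a \<ge> 1 \<Longrightarrow> pcompose (pt a) om = smult ((-1)^(Suc a)) (pt a)"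
proof (induction a rule: dec_induct)
  case base
  show ?case by (simp add: pt1)
next
  case (step a)
  define h where "h = xp * om * pt a"
  have hr: "pcompose h om = smult ((-1)^(Suc a)) h"
    unfolding h_def using step by (simp add: pcompose_mult pcompose_xp pcompose_om algebra_simps)
  have "pderiv (pcompose h om) = - pcompose (pderiv h) om"
    by (simp add: pderiv_pcompose pderiv_om)
  hence "pcompose (pderiv h) om = - smult ((-1)^(Suc a)) (pderiv h)"
    unfolding hr by (simp add: pderiv_smult pderiv_minus)
  thus ?case using pt_rec[OF step(1)] by (simp add: h_def)
qed

lemma V_rec: assumes "a \<ge> 1" "b \<ge> 1" shows "V (Suc a) b = - V a (Suc b)"
proof -
  have "V (Suc a) b = I ((xp * om * pt b) * pderiv (xp * om * pt a))"
    unfolding V_def pt_rec[OF assms(1)] by (simp add: algebra_simps)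
  also have "\<dots> = - I (pderiv (xp * om * pt b) * (xp * om * pt a))"
    unfolding I_parts by (simp add: poly_xp poly_om)
  also have "\<dots> = - V a (Suc b)"
    unfolding V_def pt_rec[OF assms(2)] by (simp add: algebra_simps)
  finally show ?thesis .
qed

lemma V1: assumes "M \<ge> 1" shows "V 1 M = I (P (Suc M))"
proof -
  have "V 1 M = - I (xp * om * pt M)"
    by (simp add: V_def pt1 I_uminus flip: pCons_one)
  also have "I (xp * om * pt M) = I (om * pderiv (xp * om * pt M))"
    unfolding I_parts by (simp add: poly_xp poly_om pderiv_om I_uminus)
  also have "\<dots> = I (pt (Suc M)) - I (P (Suc M))"
    by (simp add: pt_rec[OF assms] om_eq algebra_simps I_diff P_xpt)
  also have "I (pt (Suc M)) = 0" using assms by (simp add: I_pt0)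
  finally show ?thesis by simp
qed

lemma V_closed: assumes "a \<ge> 1" "b \<ge> 1" shows "V a b = (-1)^(a - 1) * I (P (a + b))"
  using assms
proof (induction a arbitrary: b rule: dec_induct)
  case base
  then show ?case using V1[of b] by simp
next
  case (step a)
  have "V (Suc a) b = - V a (Suc b)" by (rule V_rec) (use step in auto)
  also have "\<dots> = - ((-1)^(a - 1) * I (P (a + Suc b)))" using step by simp
  also have "\<dots> = (-1)^(Suc a - 1) * I (P (Suc a + b))"
    using step(1) by (cases a) auto
  finally show ?case .
qed

lemma W_closed: assumes "a \<ge> 1" "b \<ge> 1" "even (a + b)"
  shows "W a b = (-1)^(a - 1) * I (P (a + b)) / 2"
proof -
  have e: "(-1::real)^(Suc a) * (-1)^(Suc b) = 1"
    using assms(3) by (simp add: power_add[symmetric])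
  have "W a b = I (om * xp * xp * pt a * pt b)"
    by (simp add: W_def P_xpt[OF assms(1)] P_xpt[OF assms(2)] algebra_simps)
  also have "\<dots> = I (pcompose (om * xp * xp * pt a * pt b) om)"
    by (simp add: I_refl)
  also have "pcompose (om * xp * xp * pt a * pt b) om = smult ((-1)^(Suc a) * (-1)^(Suc b)) (xp * om * om * pt a * pt b)"
    by (simp add: pcompose_mult pcompose_xp pcompose_om pt_refl[OF assms(1)] pt_refl[OF assms(2)] algebra_simps)
  finally have w2: "W a b = I (xp * om * om * pt a * pt b)" using e by simp
  have "W a b + W a b = I (xp * om * pt a * pt b * (xp + om))"
    by (subst (1) W_def) (simp add: w2 P_xpt[OF assms(1)] P_xpt[OF assms(2)] algebra_simps flip: I_add)
  also have "\<dots> = V a b" by (simp add: V_def om_eq)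
  finally show ?thesis using V_closed[OF assms(1,2)] by simp
qed

lemma W0: assumes "N \<ge> 2" "even N" shows "W 0 N = 0"
proof -
  have N1: "N \<ge> 1" using assms by simp
  define p where "p = pt N"
  have pr: "pcompose p om = - p" using pt_refl[OF N1] assms by (simp add: p_def)
  have Ip: "I p = 0" using I_pt0 assms by (simp add: p_def)
  define c where "c = I (xp * p)"
  have "I (xp * xp * p) = I (pcompose (xp * xp * p) om)" by (simp add: I_refl)
  also have "\<dots> = - I (om * om * p)"
    by (simp add: pcompose_mult pcompose_xp pr I_uminus)
  also have "om * om * p = p - (xp * p + xp * p) + xp * xp * p"
    by (simp add: om_eq algebra_simps)
  finally have "I (xp * xp * p) = - I (p - (xp * p + xp * p) + xp * xp * p)" .
  hence "I (xp * xp * p) = - (I p - (c + c) + I (xp * xp * p))"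
    unfolding I_add I_diff c_def .
  hence q: "I (xp * xp * p) = c" using Ip by simp
  have "W 0 N = I (xp * p) - I (xp * xp * p)"
    by (simp add: W_def P0 P_xpt[OF N1] p_def om_eq algebra_simps flip: I_diff)
  thus ?thesis using q c_def by simp
qed

lemma T_val: assumes "n > 1" "m \<ge> 1" "odd (n + m)"
  shows "T n m = (-1) ^ (n - 1) * ((real n - 1) / 2) * I (P (n + m - 1))"
proof -
  obtain n' where n': "n = Suc n'" "n' \<ge> 1" using assms(1) by (cases n) auto
  define N where "N = n + m - 1"
  have evN: "even N" using assms(3) assms(2) unfolding N_def by auto
  have N2: "N \<ge> 2" using assms unfolding N_def by auto
  define c where "c = I (P N)"
  have "T n m = (\<Sum>i<Suc n'. (-1)^(n+i) * W i (N - i))"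
    unfolding T_sum N_def n' by simp
  also have "\<dots> = (-1)^n * W 0 N + (\<Sum>i<n'. (-1)^(n + Suc i) * W (Suc i) (N - Suc i))"
    by (subst sum.lessThan_Suc_shift) simp
  also have "(\<Sum>i<n'. (-1)^(n + Suc i) * W (Suc i) (N - Suc i)) = (\<Sum>i<n'. (-1)^(n - 1) * c / 2)"
  proof (rule sum.cong)
    fix i assume "i \<in> {..<n'}"
    hence i: "i < n'" by simp
    have a: "Suc i \<ge> 1" "N - Suc i \<ge> 1" "even (Suc i + (N - Suc i))"
      using i n' assms evN unfolding N_def by auto
    have "Suc i + (N - Suc i) = N" using i n' assms unfolding N_def by auto
    hence w: "W (Suc i) (N - Suc i) = (-1)^i * c / 2" using W_closed[OF a] c_def by simp
    have sg: "(-1::real)^(n + Suc i) * (-1)^i = (-1)^(n-1)"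
    proof -
      have e: "n + Suc i + i = 2 * (i + 1) + n'" using n' by simp
      have "(-1::real)^(n + Suc i) * (-1)^i = (-1)^(n + Suc i + i)" by (simp add: power_add)
      also have "\<dots> = (-1)^n'" unfolding e by (simp add: power_add power_mult)
      finally show ?thesis using n' by simp
    qed
    show "(-1)^(n + Suc i) * W (Suc i) (N - Suc i) = (-1)^(n - 1) * c / 2"
      unfolding w sg[symmetric] by (simp only: mult.assoc times_divide_eq_right)
  qed simp
  also have "W 0 N = 0" using W0[OF N2 evN] .
  finally show ?thesis using n' by (simp add: c_def N_def)
qed

lemma xp_monom: "xp * monom c d = monom c (Suc d)"
  by (rule poly_eqI) (auto simp add: coeff_xp_mult coeff_monom)

lemma I_om_monom: "I (om * monom c d) = c / real (Suc d) - c / real (Suc (Suc d))"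
  by (simp add: om_eq algebra_simps xp_monom I_diff I_monom)

lemma T_eq: assumes "m \<ge> 1"
  shows "T n m = (\<Sum>j=1..n. \<Sum>k=1..m. (-1) ^ (k + j) * real (Stirling n j) * real (Stirling m k)
                   * (fact j * fact k * harm j) / (real (k + j) * real (k + j + 1)))"
proof -
  define f where "f j = (-1::real)^(Suc j) * real (Stirling n (Suc j)) * fact (Suc j) * harm (Suc j)" for j
  define g where "g k = (-1::real)^k * real (Stirling m k) * fact k" for k
  have "qt n * P m = (\<Sum>j<n. \<Sum>k<Suc m. monom (f j * g k) (j + k))"
    unfolding qt_def P_def mk_def sum_product mult_monom f_def g_def by simp
  hence "T n m = (\<Sum>j<n. \<Sum>k<Suc m. f j * g k / real (Suc (j + k)) - f j * g k / real (Suc (Suc (j + k))))"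
    unfolding T_def by (simp only: mult.assoc sum_distrib_left I_sum I_om_monom)
  also have "\<dots> = (\<Sum>j<n. \<Sum>k=1..m. f j * g k / real (Suc (j + k)) - f j * g k / real (Suc (Suc (j + k))))"
  proof (rule sum.cong)
    fix j
    have "{..<Suc m} = insert 0 {1..m}" by auto
    moreover have "g 0 = 0" using assms by (simp add: g_def Stirling_n0)
    ultimately show "(\<Sum>k<Suc m. f j * g k / real (Suc (j + k)) - f j * g k / real (Suc (Suc (j + k))))
      = (\<Sum>k=1..m. f j * g k / real (Suc (j + k)) - f j * g k / real (Suc (Suc (j + k))))"
      by simp
  qed simp
  also have "\<dots> = (\<Sum>j<n. \<Sum>k=1..m. (-1) ^ (k + Suc j) * real (Stirling n (Suc j)) * real (Stirling m k)
                   * (fact (Suc j) * fact k * harm (Suc j)) / (real (k + Suc j) * real (k + Suc j + 1)))"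
  proof (intro sum.cong refl)
    fix j k
    have p: "(-1::real) ^ (k + Suc j) = (-1)^(Suc j) * (-1)^k" by (simp add: power_add)
    have d: "1 / real (Suc (j + k)) - 1 / real (Suc (Suc (j + k))) = 1 / (real (k + Suc j) * real (k + Suc j + 1))"
      by (simp add: field_simps)
    have "f j * g k / real (Suc (j + k)) - f j * g k / real (Suc (Suc (j + k)))
        = f j * g k * (1 / real (Suc (j + k)) - 1 / real (Suc (Suc (j + k))))"
      by (simp add: algebra_simps)
    also have "\<dots> = f j * g k / (real (k + Suc j) * real (k + Suc j + 1))" unfolding d by simp
    also have "\<dots> = (-1) ^ (k + Suc j) * real (Stirling n (Suc j)) * real (Stirling m k)
                   * (fact (Suc j) * fact k * harm (Suc j)) / (real (k + Suc j) * real (k + Suc j + 1))"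
      unfolding p f_def g_def by (simp add: algebra_simps)
    finally show "f j * g k / real (Suc (j + k)) - f j * g k / real (Suc (Suc (j + k))) = \<dots>" .
  qed
  also have "\<dots> = (\<Sum>j=1..n. \<Sum>k=1..m. (-1) ^ (k + j) * real (Stirling n j) * real (Stirling m k)
                   * (fact j * fact k * harm j) / (real (k + j) * real (k + j + 1)))"
    by (rule sum.reindex_bij_witness[of _ "\<lambda>j. j - 1" Suc]) auto
  finally show ?thesis .
qed

theorem corollary1:
  shows "(\<forall>n::nat. n \<ge> 1 \<longrightarrow>
            (\<Sum>k=1..n. (-1) ^ (k - 1) * real (Stirling n k) * fact (k - 1) * harm k)
              = bernoulli (n - 1))
       \<and> (\<forall>n m :: nat. n > 1 \<longrightarrow> m \<ge> 1 \<longrightarrow> odd (n + m) \<longrightarrow>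
            (-1) ^ (n - 1) * ((real n - 1) / 2) * bernoulli (n + m - 1)
              = (\<Sum>j=1..n. \<Sum>k=1..m. (-1) ^ (k + j) * real (Stirling n j) * real (Stirling m k)
                   * (fact j * fact k * harm j) / (real (k + j) * real (k + j + 1))))"
proof (intro conjI allI impI)
  fix n :: nat assume "n \<ge> 1" thus "(\<Sum>k=1..n. (-1) ^ (k - 1) * real (Stirling n k) * fact (k - 1) * harm k)
              = bernoulli (n - 1)" by (rule part1)
next
  fix n m :: nat assume a: "n > 1" "m \<ge> 1" "odd (n + m)"
  show "(-1) ^ (n - 1) * ((real n - 1) / 2) * bernoulli (n + m - 1)
              = (\<Sum>j=1..n. \<Sum>k=1..m. (-1) ^ (k + j) * real (Stirling n j) * real (Stirling m k)
                   * (fact j * fact k * harm j) / (real (k + j) * real (k + j + 1)))"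
    using T_val[OF a] T_eq[OF a(2)] c_bern by simp
qed

end
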